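(* Let $0<p\le1/2$ and consider $\{0,1\}^n$ with the measure $\mu_p$. If $f:\{0,1\}^n\to\mathbb{R}$ satisfies $\hat f(S)=0$ for all $|S|>d$, then for every $q\ge2$, \[ \|f\|_q\le\Big(\frac{1-p}{p\lfloor\log(1/p)\rfloor}\cdot(q-1)\Big)^{d/2}\|f\|_2. \]
   Context: $\mu_p$ is the product measure on $\{0,1\}^n$ with $\mu_p(x)=p^{\sum_i x_i}(1-p)^{n-\sum_i x_i}$, and $\|f\|_q=(\mathbb{E}_{\mu_p}|f|^q)^{1/q}$. Elements of $\{0,1\}^n$ are identified with subsets of $\{1,\dots,n\}$; for $S,T\subseteq\{1,\dots,n\}$, $u_S(T)=\big(-\sqrt{(1-p)/p}\big)^{|S\cap T|}\big(\sqrt{p/(1-p)}\big)^{|S\setminus T|}$. These form an orthonormal basis of $L^2(\mu_p)$ and $f=\sum_S\hat f(S)u_S$ with Fourier–Walsh coefficients $\hat f(S)=\mathbb{E}_{\mu_p}[fu_S]$. $\log$ is base 2. *)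

theory Defs
  imports Complex_Main
begin

text \<open>Points of the cube {0,1}^n are identified with subsets of {1..n}.\<close>

definition mu_p :: "real \<Rightarrow> nat \<Rightarrow> nat set \<Rightarrow> real" where
  "mu_p p n T = p ^ card T * (1 - p) ^ (n - card T)"

definition expect_p :: "real \<Rightarrow> nat \<Rightarrow> (nat set \<Rightarrow> real) \<Rightarrow> real" where
  "expect_p p n g = (\<Sum>T \<in> Pow {1..n}. mu_p p n T * g T)"

definition walsh_u :: "real \<Rightarrow> nat set \<Rightarrow> nat set \<Rightarrow> real" where
  "walsh_u p S T = (- sqrt ((1 - p) / p)) ^ card (S \<inter> T) * (sqrt (p / (1 - p))) ^ card (S - T)"

definition fourier_coeff :: "real \<Rightarrow> nat \<Rightarrow> (nat set \<Rightarrow> real) \<Rightarrow> nat set \<Rightarrow> real" where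
  "fourier_coeff p n f S = expect_p p n (\<lambda>T. f T * walsh_u p S T)"

definition qnorm_p :: "real \<Rightarrow> nat \<Rightarrow> real \<Rightarrow> (nat set \<Rightarrow> real) \<Rightarrow> real" where
  "qnorm_p p n q f = (expect_p p n (\<lambda>T. \<bar>f T\<bar> powr q)) powr (1 / q)"

end

theory Submission
  imports Defs "HOL-Analysis.Analysis"
begin


lemma Pow_Suc_split:
  "(\<Sum>T\<in>Pow {1..Suc n}. h T) = (\<Sum>T\<in>Pow {1..n}. h T) + (\<Sum>T\<in>Pow {1..n}. h (insert (Suc n) T))"
proof -
  have e: "{1..Suc n} = insert (Suc n) {1..n}" by auto
  have inj: "inj_on (insert (Suc n)) (Pow {1..n})"
    by (rule inj_onI) (auto simp: insert_eq_iff, (metis Suc_n_not_le_n atLeastAtMost_iff insert_ident subsetD)+)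
  have "(\<Sum>T\<in>Pow {1..Suc n}. h T) = (\<Sum>T\<in>Pow {1..n}. h T) + (\<Sum>T\<in>insert (Suc n) ` Pow {1..n}. h T)"
    unfolding e Pow_insert by (rule sum.union_disjoint) auto
  also have "(\<Sum>T\<in>insert (Suc n) ` Pow {1..n}. h T) = (\<Sum>T\<in>Pow {1..n}. h (insert (Suc n) T))"
    by (rule sum.reindex[OF inj, unfolded comp_def])
  finally show ?thesis .
qed

lemma card_le_n: "T \<in> Pow {1..n} \<Longrightarrow> card T \<le> n"
  using card_mono[of "{1..n}" T] by auto

lemma card_insert_Suc: "T \<in> Pow {1..n} \<Longrightarrow> card (insert (Suc n) T) = Suc (card T)"
  by (subst card_insert_disjoint) (auto intro: finite_subset)

lemma expect_Suc:
  "expect_p p (Suc n) g = expect_p p n (\<lambda>T. p * g (insert (Suc n) T) + (1 - p) * g T)"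
proof -
  have "expect_p p (Suc n) g = (\<Sum>T\<in>Pow {1..n}. mu_p p (Suc n) T * g T) + (\<Sum>T\<in>Pow {1..n}. mu_p p (Suc n) (insert (Suc n) T) * g (insert (Suc n) T))"
    unfolding expect_p_def by (rule Pow_Suc_split)
  also have "\<dots> = (\<Sum>T\<in>Pow {1..n}. mu_p p n T * (p * g (insert (Suc n) T) + (1 - p) * g T))"
    unfolding sum.distrib[symmetric]
  proof (rule sum.cong[OF refl])
    fix T assume T: "T \<in> Pow {1..n}"
    have c: "card T \<le> n" using card_le_n[OF T] .
    have h1: "mu_p p (Suc n) T = (1 - p) * mu_p p n T"
      unfolding mu_p_def using c by (simp add: Suc_diff_le)
    have h2: "mu_p p (Suc n) (insert (Suc n) T) = p * mu_p p n T"
      unfolding mu_p_def using c card_insert_Suc[OF T] by simp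
    show "mu_p p (Suc n) T * g T + mu_p p (Suc n) (insert (Suc n) T) * g (insert (Suc n) T) =
      mu_p p n T * (p * g (insert (Suc n) T) + (1 - p) * g T)" unfolding h1 h2 by (simp add: algebra_simps)
  qed
  finally show ?thesis unfolding expect_p_def .
qed

lemma expect_0: "expect_p p 0 g = g {}"
  unfolding expect_p_def mu_p_def by simp

lemma expect_cong: "(\<And>T. T \<in> Pow {1..n} \<Longrightarrow> g T = h T) \<Longrightarrow> expect_p p n g = expect_p p n h"
  unfolding expect_p_def by (auto intro: sum.cong)

lemma mu_nonneg: "0 \<le> p \<Longrightarrow> p \<le> 1 \<Longrightarrow> 0 \<le> mu_p p n T"
  unfolding mu_p_def by simp

lemma expect_mono: "0 \<le> p \<Longrightarrow> p \<le> 1 \<Longrightarrow> (\<And>T. T \<in> Pow {1..n} \<Longrightarrow> g T \<le> h T) \<Longrightarrow> expect_p p n g \<le> expect_p p n h"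
  unfolding expect_p_def by (auto intro!: sum_mono mult_left_mono mu_nonneg)

lemma expect_add: "expect_p p n (\<lambda>T. g T + h T) = expect_p p n g + expect_p p n h"
  unfolding expect_p_def by (simp add: algebra_simps sum.distrib)

lemma expect_cmult: "expect_p p n (\<lambda>T. c * g T) = c * expect_p p n g"
  unfolding expect_p_def by (simp add: algebra_simps sum_distrib_left)

lemma expect_const: "expect_p p n (\<lambda>T. c) = c"
proof (induction n)
  case 0 then show ?case by (simp add: expect_0)
next
  case (Suc n)
  have "expect_p p (Suc n) (\<lambda>T. c) = expect_p p n (\<lambda>T. c)"
    by (simp add: expect_Suc algebra_simps)
  then show ?case using Suc by simp
qed

lemma expect_nonneg: "0 \<le> p \<Longrightarrow> p \<le> 1 \<Longrightarrow> (\<And>T. T \<in> Pow {1..n} \<Longrightarrow> 0 \<le> g T) \<Longrightarrow> 0 \<le> expect_p p n g"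
  using expect_mono[of p n "\<lambda>_. 0" g] by (simp add: expect_const)



lemma powr_convex_ineq:
  fixes x y u r :: real
  assumes "r \<ge> 1" "x \<ge> 0" "y \<ge> 0" "0 \<le> u" "u \<le> 1"
  shows "(u * x + (1 - u) * y) powr r \<le> u * x powr r + (1 - u) * y powr r"
proof (cases "x > 0 \<and> y > 0")
  case True
  then show ?thesis using powr_convex[OF assms(1)] assms unfolding convex_on_def
    by (auto elim!: allE[of _ x] allE[of _ y] allE[of _ u])
next
  case False
  then have "x = 0 \<or> y = 0" using assms by auto
  then show ?thesis
  proof
    assume x0: "x = 0"
    have "((1 - u) * y) powr r = (1 - u) powr r * y powr r"
      using assms by (simp add: powr_mult)
    also have "\<dots> \<le> (1 - u) powr 1 * y powr r"
      using assms by (intro mult_right_mono powr_mono') auto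
    finally show ?thesis using x0 assms by (cases "u = 1") auto
  next
    assume y0: "y = 0"
    have "(u * x) powr r = u powr r * x powr r"
      using assms by (simp add: powr_mult)
    also have "\<dots> \<le> u powr 1 * x powr r"
      using assms by (intro mult_right_mono powr_mono') auto
    finally show ?thesis using y0 assms by (cases "u = 0") auto
  qed
qed

lemma minkowski:
  fixes g h :: "nat set \<Rightarrow> real" and A B r p :: real
  assumes p: "0 \<le> p" "p \<le> 1" and r: "r \<ge> 1"
    and gh: "\<And>T. T \<in> Pow {1..n} \<Longrightarrow> 0 \<le> g T \<and> 0 \<le> h T"
    and AB: "0 \<le> A" "0 \<le> B"
    and Eg: "expect_p p n (\<lambda>T. g T powr r) \<le> A powr r"
    and Eh: "expect_p p n (\<lambda>T. h T powr r) \<le> B powr r"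
  shows "expect_p p n (\<lambda>T. (g T + h T) powr r) \<le> (A + B) powr r"
proof -
  define X where "X = expect_p p n (\<lambda>T. (g T + h T) powr r)"
  have X0: "X \<ge> 0" unfolding X_def by (rule expect_nonneg[OF p]) simp
  have key: "X \<le> (A + B + 2 * e) powr r" if e: "e > 0" for e
  proof -
    define A' where "A' = A + e"
    define B' where "B' = B + e"
    define l where "l = A' / (A' + B')"
    have A'p: "A' > 0" and B'p: "B' > 0" using AB e unfolding A'_def B'_def by auto
    have l01: "0 \<le> l" "l \<le> 1" using A'p B'p unfolding l_def by auto
    have l1: "1 - l = B' / (A' + B')" using A'p B'p unfolding l_def by (simp add: field_simps)
    have pt: "(g T + h T) powr r \<le> (A' + B') powr r * (l * (g T powr r / A' powr r) + (1 - l) * (h T powr r / B' powr r))"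
      if T: "T \<in> Pow {1..n}" for T
    proof -
      have eq: "(g T + h T) / (A' + B') = l * (g T / A') + (1 - l) * (h T / B')"
      proof -
        have "l * (g T / A') = g T / (A' + B')" unfolding l_def using A'p B'p by simp
        moreover have "(1 - l) * (h T / B') = h T / (A' + B')" unfolding l1 using A'p B'p by simp
        ultimately show ?thesis by (simp add: add_divide_distrib)
      qed
      have "((g T + h T) / (A' + B')) powr r \<le> l * (g T / A') powr r + (1 - l) * (h T / B') powr r"
        unfolding eq using gh[OF T] A'p B'p l01 r by (intro powr_convex_ineq) auto
      then have "(g T + h T) powr r / (A' + B') powr r \<le> l * (g T powr r / A' powr r) + (1 - l) * (h T powr r / B' powr r)"
        using gh[OF T] A'p B'p by (simp add: powr_divide)
      then show ?thesis using A'p B'p by (simp add: field_simps)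
    qed
    have "X \<le> expect_p p n (\<lambda>T. (A' + B') powr r * (l * (g T powr r / A' powr r) + (1 - l) * (h T powr r / B' powr r)))"
      unfolding X_def by (rule expect_mono[OF p]) (rule pt)
    also have "\<dots> = (A' + B') powr r * (l / A' powr r * expect_p p n (\<lambda>T. g T powr r) + (1 - l) / B' powr r * expect_p p n (\<lambda>T. h T powr r))"
    proof -
      have "(\<lambda>T. (A' + B') powr r * (l * (g T powr r / A' powr r) + (1 - l) * (h T powr r / B' powr r)))
         = (\<lambda>T. (A' + B') powr r * ((l / A' powr r) * g T powr r + ((1 - l) / B' powr r) * h T powr r))"
        by (simp add: field_simps)
      then show ?thesis by (simp only: expect_cmult expect_add)
    qed
    also have "\<dots> \<le> (A' + B') powr r * (l / A' powr r * A' powr r + (1 - l) / B' powr r * B' powr r)"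
    proof -
      have "A powr r \<le> A' powr r" unfolding A'_def using AB e r by (intro powr_mono2) auto
      moreover have "B powr r \<le> B' powr r" unfolding B'_def using AB e r by (intro powr_mono2) auto
      ultimately show ?thesis using Eg Eh l01 A'p B'p
        by (intro mult_left_mono add_mono mult_left_mono) (auto simp: divide_nonneg_nonneg)
    qed
    also have "\<dots> = (A' + B') powr r" using A'p B'p by simp
    finally show ?thesis unfolding A'_def B'_def by (simp add: algebra_simps)
  qed
  have "X powr (1 / r) \<le> A + B"
  proof (rule field_le_epsilon)
    fix e :: real assume e: "e > 0"
    have "X powr (1 / r) \<le> ((A + B + 2 * (e / 2)) powr r) powr (1 / r)"
      using key[of "e/2"] e X0 r by (intro powr_mono2) auto
    also have "\<dots> = A + B + e" using AB e r by (simp add: powr_powr)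
    finally show "X powr (1 / r) \<le> A + B + e" .
  qed
  then have "(X powr (1 / r)) powr r \<le> (A + B) powr r"
    using X0 r by (intro powr_mono2) auto
  then show ?thesis using X0 r unfolding X_def[symmetric] by (simp add: powr_powr)
qed



lemma aux1:
  fixes r u :: real
  assumes r: "r \<ge> 1" and u: "0 \<le> u" "u < 1"
  shows "(1 - r * u) * (1 + u) powr r \<le> (1 + r * u) * (1 - u) powr r"
proof -
  define G where "G = (\<lambda>x::real. (1 + r * x) * (1 - x) powr r - (1 - r * x) * (1 + x) powr r)"
  have "G 0 \<le> G u"
  proof (rule DERIV_nonneg_imp_nondecreasing[OF u(1)])
    fix x assume x: "0 \<le> x" "x \<le> u"
    then have x1: "x < 1" using u by auto
    have d1: "((\<lambda>x. (1 - x) powr r) has_real_derivative r * (1 - x) powr (r - 1) * (-1)) (at x)"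
    proof -
      have "((\<lambda>x. 1 - x) has_real_derivative -1) (at x)" by (auto intro!: derivative_eq_intros)
      from DERIV_fun_powr[OF this, of r] x1 show ?thesis by simp
    qed
    have d2: "((\<lambda>x. (1 + x) powr r) has_real_derivative r * (1 + x) powr (r - 1) * 1) (at x)"
    proof -
      have "((\<lambda>x. 1 + x) has_real_derivative 1) (at x)" by (auto intro!: derivative_eq_intros)
      from DERIV_fun_powr[OF this, of r] x show ?thesis by simp
    qed
    have dG: "(G has_real_derivative
        (r * (1 - x) powr r + (1 + r * x) * (r * (1 - x) powr (r - 1) * (-1)))
        - ((- r) * (1 + x) powr r + (1 - r * x) * (r * (1 + x) powr (r - 1) * 1))) (at x)"
      unfolding G_def
      by (intro DERIV_diff DERIV_mult d1 d2) (use x x1 in \<open>auto intro!: derivative_eq_intros\<close>)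
    have e1: "(1 - x) powr r = (1 - x) * (1 - x) powr (r - 1)"
      using x1 by (simp add: powr_diff)
    have e2: "(1 + x) powr r = (1 + x) * (1 + x) powr (r - 1)"
      using x by (simp add: powr_diff)
    have mono: "(1 - x) powr (r - 1) \<le> (1 + x) powr (r - 1)"
      using x x1 r by (intro powr_mono2) auto
    have eq: "(r * (1 - x) powr r + (1 + r * x) * (r * (1 - x) powr (r - 1) * (-1)))
        - ((- r) * (1 + x) powr r + (1 - r * x) * (r * (1 + x) powr (r - 1) * 1))
        = r * (1 + r) * x * ((1 + x) powr (r - 1) - (1 - x) powr (r - 1))"
      unfolding e1 e2 by (simp add: algebra_simps)
    have "0 \<le> r * (1 + r) * x * ((1 + x) powr (r - 1) - (1 - x) powr (r - 1))"
      using mono r x by (intro mult_nonneg_nonneg) auto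
    then show "\<exists>y. (G has_real_derivative y) (at x) \<and> 0 \<le> y"
      using dG eq by auto
  qed
  then show ?thesis unfolding G_def by simp
qed



lemma two_point_1d:
  fixes q u :: real
  assumes q: "q \<ge> 2" and u: "0 \<le> u" "u \<le> 1"
  shows "(1 + u) powr q + (1 - u) powr q \<le> 2 * (1 + (q - 1) * u\<^sup>2) powr (q / 2)"
proof -
  define N where "N = (\<lambda>x::real. (1 + x) powr q + (1 - x) powr q)"
  define V where "V = (\<lambda>x::real. 1 + (q - 1) * x\<^sup>2)"
  define M where "M = (\<lambda>x. V x powr (q / 2))"
  have Vpos: "V x > 0" for x unfolding V_def using q by (auto intro: add_pos_nonneg)
  have Mpos: "M x > 0" for x unfolding M_def using Vpos[of x] by simp
  have "N u / M u \<le> N 0 / M 0"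
  proof (rule DERIV_nonpos_imp_decreasing_open[OF u(1)])
    fix x assume x: "0 < x" "x < u"
    then have x1: "x < 1" using u by auto
    have d1: "((\<lambda>x. (1 - x) powr q) has_real_derivative q * (1 - x) powr (q - 1) * (-1)) (at x)"
    proof -
      have "((\<lambda>x. 1 - x) has_real_derivative -1) (at x)" by (auto intro!: derivative_eq_intros)
      from DERIV_fun_powr[OF this, of q] x1 show ?thesis by simp
    qed
    have d2: "((\<lambda>x. (1 + x) powr q) has_real_derivative q * (1 + x) powr (q - 1) * 1) (at x)"
    proof -
      have "((\<lambda>x. 1 + x) has_real_derivative 1) (at x)" by (auto intro!: derivative_eq_intros)
      from DERIV_fun_powr[OF this, of q] x show ?thesis by simp
    qed
    have dN: "(N has_real_derivative q * (1 + x) powr (q - 1) * 1 + q * (1 - x) powr (q - 1) * (-1)) (at x)"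
      unfolding N_def by (intro DERIV_add d1 d2)
    have dV: "(V has_real_derivative (q - 1) * (2 * x)) (at x)"
      unfolding V_def by (auto intro!: derivative_eq_intros)
    have dM: "(M has_real_derivative (q / 2) * V x powr (q / 2 - 1) * ((q - 1) * (2 * x))) (at x)"
    proof -
      from DERIV_fun_powr[OF dV Vpos[of x], of "q/2"] show ?thesis unfolding M_def by simp
    qed
    define A where "A = (1 + x) powr (q - 1)"
    define B where "B = (1 - x) powr (q - 1)"
    define W where "W = V x powr (q / 2 - 1)"
    have W0: "W > 0" unfolding W_def using Vpos[of x] by simp
    have NA: "N x = (1 + x) * A + (1 - x) * B"
      unfolding N_def A_def B_def using x x1 by (simp add: powr_diff)
    have MW: "M x = V x * W"
      unfolding M_def W_def using Vpos[of x] by (simp add: powr_diff)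
    have key: "(1 - (q - 1) * x) * A \<le> (1 + (q - 1) * x) * B"
      unfolding A_def B_def using aux1[of "q - 1" x] q x x1 by auto
    have num: "(q * A * 1 + q * B * (-1)) * M x - N x * ((q / 2) * W * ((q - 1) * (2 * x)))
        = q * W * ((1 - (q - 1) * x) * A - (1 + (q - 1) * x) * B)"
      unfolding NA MW V_def by (simp add: algebra_simps power2_eq_square)
    have numle: "(q * A * 1 + q * B * (-1)) * M x - N x * ((q / 2) * W * ((q - 1) * (2 * x))) \<le> 0"
      unfolding num using key W0 q by (intro mult_nonneg_nonpos) auto
    have dPhi: "((\<lambda>x. N x / M x) has_real_derivative
        ((q * A * 1 + q * B * (-1)) * M x - N x * ((q / 2) * W * ((q - 1) * (2 * x)))) / (M x * M x)) (at x)"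
      using DERIV_divide[OF dN dM] Mpos[of x] unfolding A_def B_def W_def by simp
    show "\<exists>y. ((\<lambda>x. N x / M x) has_real_derivative y) (at x) \<and> y \<le> 0"
      using dPhi numle by (intro exI[of _ "((q * A * 1 + q * B * (-1)) * M x - N x * ((q / 2) * W * ((q - 1) * (2 * x)))) / (M x * M x)"])
        (auto intro: divide_nonpos_nonneg)
  next
    show "continuous_on {0..u} (\<lambda>x. N x / M x)"
      unfolding N_def M_def V_def using q Mpos[unfolded M_def V_def] u
      by (intro continuous_intros continuous_on_powr') (auto intro: add_pos_nonneg)
  qed
  moreover have "N 0 / M 0 = 2" unfolding N_def M_def V_def by simp
  ultimately have "N u / M u \<le> 2" by simp
  then show ?thesis using Mpos[of u] unfolding N_def M_def V_def by (simp add: field_simps)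
qed



lemma abs_powr_sq: "\<bar>a::real\<bar> powr q = (a\<^sup>2) powr (q / 2)"
proof (cases "a = 0")
  case True then show ?thesis by simp
next
  case False
  then have e: "a\<^sup>2 = \<bar>a\<bar> powr 2" by (simp add: powr_realpow)
  have "(\<bar>a\<bar> powr 2) powr (q / 2) = \<bar>a\<bar> powr (2 * (q / 2))" by (rule powr_powr)
  then show ?thesis unfolding e by simp
qed

lemma two_point_aux:
  fixes q x y :: real
  assumes q: "q \<ge> 2" and xy: "\<bar>y\<bar> \<le> \<bar>x\<bar>"
  shows "\<bar>x + y\<bar> powr q + \<bar>x - y\<bar> powr q \<le> 2 * (x\<^sup>2 + (q - 1) * y\<^sup>2) powr (q / 2)"
proof (cases "x = 0")
  case True then show ?thesis using xy by simp
next
  case False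
  define v where "v = y / x"
  have v1: "\<bar>v\<bar> \<le> 1" unfolding v_def using xy False by (simp add: abs_divide divide_le_eq_1)
  have ex1: "\<bar>x + y\<bar> = \<bar>x\<bar> * \<bar>1 + v\<bar>" unfolding v_def using False
    by (simp add: abs_mult[symmetric] distrib_left)
  have ex2: "\<bar>x - y\<bar> = \<bar>x\<bar> * \<bar>1 - v\<bar>" unfolding v_def using False
    by (simp add: abs_mult[symmetric] right_diff_distrib)
  have s: "\<bar>1 + v\<bar> powr q + \<bar>1 - v\<bar> powr q = (1 + \<bar>v\<bar>) powr q + (1 - \<bar>v\<bar>) powr q"
    using v1 by (cases "v \<ge> 0") auto
  have "\<bar>x + y\<bar> powr q + \<bar>x - y\<bar> powr q = \<bar>x\<bar> powr q * ((1 + \<bar>v\<bar>) powr q + (1 - \<bar>v\<bar>) powr q)"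
    unfolding ex1 ex2 s[symmetric] by (simp add: powr_mult distrib_left)
  also have "\<dots> \<le> \<bar>x\<bar> powr q * (2 * (1 + (q - 1) * \<bar>v\<bar>\<^sup>2) powr (q / 2))"
    using two_point_1d[OF q, of "\<bar>v\<bar>"] v1 by (intro mult_left_mono) auto
  also have "\<dots> = 2 * ((x\<^sup>2) powr (q / 2) * (1 + (q - 1) * v\<^sup>2) powr (q / 2))"
    by (simp add: abs_powr_sq)
  also have "\<dots> = 2 * (x\<^sup>2 * (1 + (q - 1) * v\<^sup>2)) powr (q / 2)"
    using q by (subst powr_mult) (auto intro: add_nonneg_nonneg)
  also have "x\<^sup>2 * (1 + (q - 1) * v\<^sup>2) = x\<^sup>2 + (q - 1) * y\<^sup>2"
    unfolding v_def using False by (simp add: field_simps power2_eq_square)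
  finally show ?thesis .
qed

lemma two_point:
  fixes q x y :: real
  assumes q: "q \<ge> 2"
  shows "\<bar>x + y\<bar> powr q + \<bar>x - y\<bar> powr q \<le> 2 * (x\<^sup>2 + (q - 1) * y\<^sup>2) powr (q / 2)"
proof (cases "\<bar>y\<bar> \<le> \<bar>x\<bar>")
  case True then show ?thesis using two_point_aux[OF q] by blast
next
  case False
  have "\<bar>x + y\<bar> powr q + \<bar>x - y\<bar> powr q = \<bar>y + x\<bar> powr q + \<bar>y - x\<bar> powr q"
    by (simp add: abs_minus_commute add.commute)
  also have "\<dots> \<le> 2 * (y\<^sup>2 + (q - 1) * x\<^sup>2) powr (q / 2)"
    using two_point_aux[OF q, of x y] False by simp
  also have "\<dots> \<le> 2 * (x\<^sup>2 + (q - 1) * y\<^sup>2) powr (q / 2)"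
  proof -
    have "x\<^sup>2 \<le> y\<^sup>2" using False by (simp add: abs_le_square_iff)
    then have "y\<^sup>2 + (q - 1) * x\<^sup>2 \<le> x\<^sup>2 + (q - 1) * y\<^sup>2"
    proof -
      have "0 \<le> (q - 2) * (y\<^sup>2 - x\<^sup>2)" using q \<open>x\<^sup>2 \<le> y\<^sup>2\<close> by (intro mult_nonneg_nonneg) auto
      then show ?thesis by (simp add: algebra_simps)
    qed
    then show ?thesis using q by (intro mult_left_mono powr_mono2) (auto intro: add_nonneg_nonneg)
  qed
  finally show ?thesis .
qed



lemma rademacher:
  fixes q a w :: real
  assumes q: "q \<ge> 2"
  shows "expect_p (1/2) n (\<lambda>T. \<bar>a + w * (2 * real (card T) - real n)\<bar> powr q)
    \<le> (a\<^sup>2 + (q - 1) * real n * w\<^sup>2) powr (q / 2)"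
proof (induction n)
  case 0
  then show ?case by (simp add: expect_0 abs_powr_sq)
next
  case (Suc n)
  define X where "X = (\<lambda>T::nat set. a + w * (2 * real (card T) - real n))"
  have "expect_p (1/2) (Suc n) (\<lambda>T. \<bar>a + w * (2 * real (card T) - real (Suc n))\<bar> powr q)
     = expect_p (1/2) n (\<lambda>T. (\<bar>X T + w\<bar> powr q + \<bar>X T - w\<bar> powr q) / 2)"
    unfolding expect_Suc
  proof (rule expect_cong)
    fix T assume T: "T \<in> Pow {1..n}"
    show "1/2 * \<bar>a + w * (2 * real (card (insert (Suc n) T)) - real (Suc n))\<bar> powr q +
        (1 - 1/2) * \<bar>a + w * (2 * real (card T) - real (Suc n))\<bar> powr q =
        (\<bar>X T + w\<bar> powr q + \<bar>X T - w\<bar> powr q) / 2"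
      unfolding card_insert_Suc[OF T] X_def by (simp add: algebra_simps)
  qed
  also have "\<dots> \<le> expect_p (1/2) n (\<lambda>T. ((X T)\<^sup>2 + (q - 1) * w\<^sup>2) powr (q / 2))"
    by (rule expect_mono) (use two_point[OF q] in \<open>auto simp: mult.commute\<close>)
  also have "\<dots> \<le> ((a\<^sup>2 + (q - 1) * real n * w\<^sup>2) + (q - 1) * w\<^sup>2) powr (q / 2)"
  proof (rule minkowski)
    show "expect_p (1/2) n (\<lambda>T. ((X T)\<^sup>2) powr (q / 2)) \<le> (a\<^sup>2 + (q - 1) * real n * w\<^sup>2) powr (q / 2)"
      using Suc.IH unfolding X_def by (simp add: abs_powr_sq)
    show "expect_p (1/2) n (\<lambda>T. ((q - 1) * w\<^sup>2) powr (q / 2)) \<le> ((q - 1) * w\<^sup>2) powr (q / 2)"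
      by (simp add: expect_const)
  qed (use q in auto)
  also have "(a\<^sup>2 + (q - 1) * real n * w\<^sup>2) + (q - 1) * w\<^sup>2 = a\<^sup>2 + (q - 1) * real (Suc n) * w\<^sup>2"
    by (simp add: algebra_simps)
  finally show ?case .
qed

lemma expect_card:
  "expect_p (1/2) n (\<lambda>T. 2 * real (card T) - real n) = 0"
proof (induction n)
  case 0 then show ?case by (simp add: expect_0)
next
  case (Suc n)
  have "expect_p (1/2) (Suc n) (\<lambda>T. 2 * real (card T) - real (Suc n)) = expect_p (1/2) n (\<lambda>T. 2 * real (card T) - real n)"
    unfolding expect_Suc by (rule expect_cong) (simp add: card_insert_Suc algebra_simps)
  then show ?case using Suc by simp
qed



lemma convex_abs_powr: "q \<ge> 1 \<Longrightarrow> convex_on UNIV (\<lambda>z::real. \<bar>a + z\<bar> powr q)"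
proof (rule convex_onI)
  fix t x y :: real assume q: "q \<ge> 1" and t: "t > 0" "t < 1"
  have "\<bar>a + ((1 - t) *\<^sub>R x + t *\<^sub>R y)\<bar> = \<bar>(1 - t) * (a + x) + t * (a + y)\<bar>"
    by (simp add: algebra_simps)
  also have "\<dots> \<le> (1 - t) * \<bar>a + x\<bar> + t * \<bar>a + y\<bar>"
    using abs_triangle_ineq[of "(1 - t) * (a + x)" "t * (a + y)"] t by (simp add: abs_mult)
  finally have "\<bar>a + ((1 - t) *\<^sub>R x + t *\<^sub>R y)\<bar> powr q \<le> ((1 - t) * \<bar>a + x\<bar> + t * \<bar>a + y\<bar>) powr q"
    using q by (intro powr_mono2) auto
  also have "\<dots> \<le> (1 - t) * \<bar>a + x\<bar> powr q + (1 - (1 - t)) * \<bar>a + y\<bar> powr q"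
    using powr_convex_ineq[of q "\<bar>a + x\<bar>" "\<bar>a + y\<bar>" "1 - t"] q t by auto
  finally show "\<bar>a + ((1 - t) *\<^sub>R x + t *\<^sub>R y)\<bar> powr q \<le> (1 - t) * \<bar>a + x\<bar> powr q + t * \<bar>a + y\<bar> powr q"
    by simp
qed auto

lemma expect_half: "expect_p (1/2) k g = (\<Sum>T\<in>Pow {1..k}. (1/2)^k * g T)"
  unfolding expect_p_def
proof (rule sum.cong[OF refl])
  fix T assume T: "T \<in> Pow {1..k}"
  have "mu_p (1/2) k T = (1/2::real)^(card T + (k - card T))"
    unfolding mu_p_def power_add by simp
  also have "card T + (k - card T) = k" using card_le_n[OF T] by simp
  finally show "mu_p (1/2) k T * g T = (1/2)^k * g T" by simp
qed

lemma biased_bit: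
  fixes p q a b :: real and k :: nat
  assumes p: "0 < p" "p \<le> 1/2" and k: "k \<ge> 1" and kp: "2^k * p \<le> 1" and q: "q \<ge> 2"
  defines "c \<equiv> sqrt (real k / (q - 1))"
  shows "p * \<bar>a - c * b\<bar> powr q + (1 - p) * \<bar>a + c * (p / (1 - p)) * b\<bar> powr q \<le> (a\<^sup>2 + b\<^sup>2) powr (q / 2)"
proof -
  define w where "w = c * b / real k"
  define Z where "Z = (\<lambda>T::nat set. w * (2 * real (card T) - real k))"
  define \<phi> where "\<phi> = (\<lambda>z::real. \<bar>a + z\<bar> powr q)"
  define E where "E = expect_p (1/2) k (\<lambda>T. \<phi> (Z T))"
  have c2: "c\<^sup>2 = real k / (q - 1)" unfolding c_def using q by simp
  have "E \<le> (a\<^sup>2 + (q - 1) * real k * w\<^sup>2) powr (q / 2)"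
    unfolding E_def \<phi>_def Z_def using rademacher[OF q, where a=a and w=w and n=k] by simp
  also have "(q - 1) * real k * w\<^sup>2 = b\<^sup>2"
  proof -
    have qc: "(q - 1) * c\<^sup>2 = real k" unfolding c2 using q by simp
    have "(q - 1) * real k * w\<^sup>2 = ((q - 1) * c\<^sup>2) * b\<^sup>2 / real k"
      unfolding w_def using k by (simp add: power_divide power_mult_distrib field_simps power2_eq_square)
    then show ?thesis unfolding qc using k by simp
  qed
  finally have Eup: "E \<le> (a\<^sup>2 + b\<^sup>2) powr (q / 2)" .
  define h where "h = (1/2::real)^k"
  have hp: "p \<le> h" unfolding h_def using kp by (simp add: field_simps power_one_over)
  have p1: "1 - p > 0" using p by simp
  define om where "om = (\<lambda>T::nat set. (h - (if T = {} then p else 0)) / (1 - p))"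
  have sumh: "(\<Sum>T\<in>Pow {1..k}. h) = 1"
    unfolding h_def by (simp add: card_Pow power_one_over)
  have sumh': "real (card (Pow {1..k})) * h = 1" using sumh by simp
  have sumif: "(\<Sum>T\<in>Pow {1..k}. (if T = {} then x else 0)) = x" for x :: real
    by (simp add: sum.delta')
  have sumZ: "(\<Sum>T\<in>Pow {1..k}. h * Z T) = 0"
  proof -
    have "(\<Sum>T\<in>Pow {1..k}. h * Z T) = w * expect_p (1/2) k (\<lambda>T. 2 * real (card T) - real k)"
      unfolding expect_half h_def Z_def by (simp add: sum_distrib_left algebra_simps)
    then show ?thesis by (simp add: expect_card)
  qed
  have EE: "E = (\<Sum>T\<in>Pow {1..k}. h * \<phi> (Z T))" unfolding E_def expect_half h_def ..
  have Z0: "Z {} = - (c * b)" unfolding Z_def w_def using k by simp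
  have jensen: "\<phi> (\<Sum>T\<in>Pow {1..k}. om T *\<^sub>R Z T) \<le> (\<Sum>T\<in>Pow {1..k}. om T * \<phi> (Z T))"
  proof (rule convex_on_sum)
    show "convex_on UNIV \<phi>" unfolding \<phi>_def using q by (intro convex_abs_powr) auto
    show "(\<Sum>T\<in>Pow {1..k}. om T) = 1"
    proof -
      have "(\<Sum>T\<in>Pow {1..k}. om T) = ((\<Sum>T\<in>Pow {1..k}. h) - (\<Sum>T\<in>Pow {1..k}. (if T = {} then p else 0))) / (1 - p)"
        unfolding om_def by (simp only: sum_divide_distrib[symmetric] sum_subtractf)
      also have "\<dots> = 1" unfolding sumh sumif using p1 by simp
      finally show ?thesis .
    qed
    show "\<And>T. T \<in> Pow {1..k} \<Longrightarrow> 0 \<le> om T"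
      unfolding om_def using hp p1 h_def by auto
  qed auto
  have lhs: "(\<Sum>T\<in>Pow {1..k}. om T *\<^sub>R Z T) = c * (p / (1 - p)) * b"
  proof -
    have "(\<Sum>T\<in>Pow {1..k}. om T *\<^sub>R Z T) = ((\<Sum>T\<in>Pow {1..k}. h * Z T) - (\<Sum>T\<in>Pow {1..k}. (if T = {} then p * Z T else 0))) / (1 - p)"
    proof -
      have "(\<Sum>T\<in>Pow {1..k}. om T *\<^sub>R Z T) = (\<Sum>T\<in>Pow {1..k}. (h * Z T - (if T = {} then p * Z T else 0)) / (1 - p))"
        unfolding om_def by (rule sum.cong) (auto simp: algebra_simps)
      then show ?thesis by (simp only: sum_divide_distrib[symmetric] sum_subtractf)
    qed
    also have "\<dots> = (0 - p * Z {}) / (1 - p)" unfolding sumZ by (simp add: sum.delta')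
    finally show ?thesis unfolding Z0 by simp
  qed
  have rhs: "(\<Sum>T\<in>Pow {1..k}. om T * \<phi> (Z T)) = (E - p * \<phi> (- (c * b))) / (1 - p)"
  proof -
    have "(\<Sum>T\<in>Pow {1..k}. om T * \<phi> (Z T)) = ((\<Sum>T\<in>Pow {1..k}. h * \<phi> (Z T)) - (\<Sum>T\<in>Pow {1..k}. (if T = {} then p * \<phi> (Z T) else 0))) / (1 - p)"
    proof -
      have "(\<Sum>T\<in>Pow {1..k}. om T * \<phi> (Z T)) = (\<Sum>T\<in>Pow {1..k}. (h * \<phi> (Z T) - (if T = {} then p * \<phi> (Z T) else 0)) / (1 - p))"
        unfolding om_def by (rule sum.cong) (auto simp: field_simps)
      then show ?thesis by (simp only: sum_divide_distrib[symmetric] sum_subtractf)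
    qed
    also have "\<dots> = (E - p * \<phi> (Z {})) / (1 - p)" unfolding EE by (simp add: sum.delta')
    finally show ?thesis unfolding Z0 .
  qed
  have "\<phi> (c * (p / (1 - p)) * b) \<le> (E - p * \<phi> (- (c * b))) / (1 - p)"
    using jensen unfolding lhs rhs .
  then have "p * \<phi> (- (c * b)) + (1 - p) * \<phi> (c * (p / (1 - p)) * b) \<le> E"
    using p1 by (simp add: field_simps)
  then show ?thesis using Eup unfolding \<phi>_def by simp
qed



definition wfac :: "real \<Rightarrow> nat \<Rightarrow> nat set \<Rightarrow> real" where
  "wfac p i T = (if i \<in> T then - sqrt ((1 - p) / p) else sqrt (p / (1 - p)))"

lemma walsh_prod: "finite S \<Longrightarrow> walsh_u p S T = (\<Prod>i\<in>S. wfac p i T)"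
proof -
  assume fin: "finite S"
  have "(\<Prod>i\<in>S. wfac p i T) = (\<Prod>i\<in>S \<inter> T. wfac p i T) * (\<Prod>i\<in>S - T. wfac p i T)"
    using fin by (rule prod.Int_Diff)
  also have "(\<Prod>i\<in>S \<inter> T. wfac p i T) = (- sqrt ((1 - p) / p)) ^ card (S \<inter> T)"
    by (subst prod.cong[OF refl, of _ _ "\<lambda>_. - sqrt ((1 - p) / p)"]) (auto simp: wfac_def)
  also have "(\<Prod>i\<in>S - T. wfac p i T) = (sqrt (p / (1 - p))) ^ card (S - T)"
    by (subst prod.cong[OF refl, of _ _ "\<lambda>_. sqrt (p / (1 - p))"]) (auto simp: wfac_def)
  finally show ?thesis unfolding walsh_u_def by simp
qed

lemma walsh_insert_T:
  assumes S: "S \<in> Pow {1..n}"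
  shows "walsh_u p S (insert (Suc n) T) = walsh_u p S T"
proof -
  have fin: "finite S" using S by (auto intro: finite_subset)
  show ?thesis unfolding walsh_prod[OF fin]
    by (rule prod.cong[OF refl]) (use S in \<open>auto simp: wfac_def\<close>)
qed

lemma walsh_insert_S:
  assumes S: "S \<in> Pow {1..n}"
  shows "walsh_u p (insert (Suc n) S) T = wfac p (Suc n) T * walsh_u p S T"
proof -
  have fin: "finite S" using S by (auto intro: finite_subset)
  have nin: "Suc n \<notin> S" using S by auto
  show ?thesis unfolding walsh_prod[OF fin] walsh_prod[OF finite_insert[THEN iffD2, OF fin]]
    using fin nin by simp
qed

lemma walsh_empty: "walsh_u p {} T = 1"
  unfolding walsh_u_def by simp

lemma hyper:
  fixes p q \<rho> :: real
  assumes p: "0 < p" "p < 1" and q: "q \<ge> 2"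
    and OB: "\<And>a b. p * \<bar>a - \<rho> * sqrt ((1 - p) / p) * b\<bar> powr q + (1 - p) * \<bar>a + \<rho> * sqrt (p / (1 - p)) * b\<bar> powr q
                 \<le> (a\<^sup>2 + b\<^sup>2) powr (q / 2)"
  shows "expect_p p n (\<lambda>T. \<bar>\<Sum>S\<in>Pow {1..n}. \<rho> ^ card S * c S * walsh_u p S T\<bar> powr q)
           \<le> (\<Sum>S\<in>Pow {1..n}. (c S)\<^sup>2) powr (q / 2)"
proof (induction n arbitrary: c)
  case 0
  then show ?case by (simp add: expect_0 walsh_empty abs_powr_sq)
next
  case (Suc n)
  define x where "x = Suc n"
  define A where "A = (\<lambda>T. \<Sum>S\<in>Pow {1..n}. \<rho> ^ card S * c S * walsh_u p S T)"
  define B where "B = (\<lambda>T. \<Sum>S\<in>Pow {1..n}. \<rho> ^ card S * c (insert x S) * walsh_u p S T)"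
  have F: "(\<Sum>S\<in>Pow {1..Suc n}. \<rho> ^ card S * c S * walsh_u p S T) = A T + \<rho> * wfac p x T * B T" for T
  proof -
    have "(\<Sum>S\<in>Pow {1..Suc n}. \<rho> ^ card S * c S * walsh_u p S T)
      = A T + (\<Sum>S\<in>Pow {1..n}. \<rho> ^ card (insert x S) * c (insert x S) * walsh_u p (insert x S) T)"
      unfolding Pow_Suc_split A_def x_def ..
    also have "(\<Sum>S\<in>Pow {1..n}. \<rho> ^ card (insert x S) * c (insert x S) * walsh_u p (insert x S) T)
        = (\<Sum>S\<in>Pow {1..n}. \<rho> * wfac p x T * (\<rho> ^ card S * c (insert x S) * walsh_u p S T))"
      unfolding x_def by (rule sum.cong[OF refl]) (simp add: card_insert_Suc walsh_insert_S)
    also have "\<dots> = \<rho> * wfac p x T * B T" unfolding B_def by (simp add: sum_distrib_left)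
    finally show ?thesis .
  qed
  have AT: "A (insert x T) = A T" and BT: "B (insert x T) = B T" for T
    unfolding A_def B_def x_def by (auto intro!: sum.cong simp: walsh_insert_T)
  have "expect_p p (Suc n) (\<lambda>T. \<bar>\<Sum>S\<in>Pow {1..Suc n}. \<rho> ^ card S * c S * walsh_u p S T\<bar> powr q)
      = expect_p p n (\<lambda>T. p * \<bar>A T - \<rho> * sqrt ((1 - p) / p) * B T\<bar> powr q + (1 - p) * \<bar>A T + \<rho> * sqrt (p / (1 - p)) * B T\<bar> powr q)"
    unfolding F expect_Suc unfolding x_def[symmetric]
  proof (rule expect_cong)
    fix T assume T: "T \<in> Pow {1..n}"
    have "x \<notin> T" using T unfolding x_def by auto
    then show "p * \<bar>A (insert x T) + \<rho> * wfac p x (insert x T) * B (insert x T)\<bar> powr q + (1 - p) * \<bar>A T + \<rho> * wfac p x T * B T\<bar> powr q =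
      p * \<bar>A T - \<rho> * sqrt ((1 - p) / p) * B T\<bar> powr q + (1 - p) * \<bar>A T + \<rho> * sqrt (p / (1 - p)) * B T\<bar> powr q"
      unfolding AT BT by (simp add: wfac_def)
  qed
  also have "\<dots> \<le> expect_p p n (\<lambda>T. ((A T)\<^sup>2 + (B T)\<^sup>2) powr (q / 2))"
    by (rule expect_mono) (use p OB in auto)
  also have "\<dots> \<le> ((\<Sum>S\<in>Pow {1..n}. (c S)\<^sup>2) + (\<Sum>S\<in>Pow {1..n}. (c (insert x S))\<^sup>2)) powr (q / 2)"
  proof (rule minkowski)
    show "expect_p p n (\<lambda>T. ((A T)\<^sup>2) powr (q / 2)) \<le> (\<Sum>S\<in>Pow {1..n}. (c S)\<^sup>2) powr (q / 2)"
      using Suc.IH[of c] unfolding A_def by (simp add: abs_powr_sq)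
    show "expect_p p n (\<lambda>T. ((B T)\<^sup>2) powr (q / 2)) \<le> (\<Sum>S\<in>Pow {1..n}. (c (insert x S))\<^sup>2) powr (q / 2)"
      using Suc.IH[of "\<lambda>S. c (insert x S)"] unfolding B_def by (simp add: abs_powr_sq)
  qed (use p q in \<open>auto intro: sum_nonneg\<close>)
  also have "(\<Sum>S\<in>Pow {1..n}. (c S)\<^sup>2) + (\<Sum>S\<in>Pow {1..n}. (c (insert x S))\<^sup>2) = (\<Sum>S\<in>Pow {1..Suc n}. (c S)\<^sup>2)"
    unfolding Pow_Suc_split x_def ..
  finally show ?case .
qed



lemma st_one: "0 < p \<Longrightarrow> p < 1 \<Longrightarrow> sqrt ((1 - p) / p) * sqrt (p / (1 - p)) = 1"
  by (simp add: real_sqrt_mult[symmetric])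

lemma kernel:
  assumes p: "0 < p" "p < 1" and T: "T \<in> Pow {1..n}" and T': "T' \<in> Pow {1..n}"
  shows "(\<Sum>S\<in>Pow {1..n}. walsh_u p S T * walsh_u p S T') = (if T = T' then 1 / mu_p p n T else 0)"
proof -
  have "(\<Sum>S\<in>Pow {1..n}. walsh_u p S T * walsh_u p S T') = (\<Sum>S\<in>Pow {1..n}. (\<Prod>i\<in>S. wfac p i T * wfac p i T') * (\<Prod>i\<in>{1..n} - S. 1))"
    by (rule sum.cong[OF refl]) (auto simp: walsh_prod finite_subset prod.distrib)
  also have "\<dots> = (\<Prod>i\<in>{1..n}. wfac p i T * wfac p i T' + 1)"
    by (rule prod_add[symmetric]) simp
  finally have eq: "(\<Sum>S\<in>Pow {1..n}. walsh_u p S T * walsh_u p S T') = (\<Prod>i\<in>{1..n}. wfac p i T * wfac p i T' + 1)" .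
  show ?thesis
  proof (cases "T = T'")
    case False
    then obtain i where i: "i \<in> {1..n}" "(i \<in> T) \<noteq> (i \<in> T')" using T T' by blast
    have "wfac p i T * wfac p i T' + 1 = 0"
      using i st_one[OF p] unfolding wfac_def by (auto simp: mult.commute)
    then have "(\<Prod>i\<in>{1..n}. wfac p i T * wfac p i T' + 1) = 0"
      using i by (intro prod_zero) auto
    then show ?thesis using eq False by simp
  next
    case True
    have s2: "(sqrt ((1 - p) / p))\<^sup>2 = (1 - p) / p" using p by simp
    have t2: "(sqrt (p / (1 - p)))\<^sup>2 = p / (1 - p)" using p by simp
    have "(\<Prod>i\<in>{1..n}. wfac p i T * wfac p i T + 1) = (\<Prod>i\<in>{1..n} \<inter> T. wfac p i T * wfac p i T + 1) * (\<Prod>i\<in>{1..n} - T. wfac p i T * wfac p i T + 1)"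
      by (rule prod.Int_Diff) simp
    also have "(\<Prod>i\<in>{1..n} \<inter> T. wfac p i T * wfac p i T + 1) = (1 / p) ^ card T"
    proof -
      have I: "{1..n} \<inter> T = T" using T by auto
      have "(\<Prod>i\<in>T. wfac p i T * wfac p i T + 1) = (\<Prod>i\<in>T. 1 / p)"
        by (rule prod.cong[OF refl]) (use p s2 in \<open>auto simp: wfac_def power2_eq_square field_simps\<close>)
      then show ?thesis unfolding I by simp
    qed
    also have "(\<Prod>i\<in>{1..n} - T. wfac p i T * wfac p i T + 1) = (1 / (1 - p)) ^ (n - card T)"
    proof -
      have "(\<Prod>i\<in>{1..n} - T. wfac p i T * wfac p i T + 1) = (\<Prod>i\<in>{1..n} - T. 1 / (1 - p))"
        by (rule prod.cong[OF refl]) (use p t2 in \<open>auto simp: wfac_def power2_eq_square field_simps\<close>)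
      moreover have "card ({1..n} - T) = n - card T" using T by (simp add: card_Diff_subset finite_subset)
      ultimately show ?thesis by simp
    qed
    finally show ?thesis using eq True p unfolding mu_p_def by (simp add: power_one_over)
  qed
qed

lemma mu_pos: "0 < p \<Longrightarrow> p < 1 \<Longrightarrow> 0 < mu_p p n T"
  unfolding mu_p_def by simp

lemma inversion:
  assumes p: "0 < p" "p < 1" and T: "T \<in> Pow {1..n}"
  shows "(\<Sum>S\<in>Pow {1..n}. fourier_coeff p n f S * walsh_u p S T) = f T"
proof -
  have "(\<Sum>S\<in>Pow {1..n}. fourier_coeff p n f S * walsh_u p S T)
      = (\<Sum>S\<in>Pow {1..n}. \<Sum>T'\<in>Pow {1..n}. mu_p p n T' * f T' * (walsh_u p S T' * walsh_u p S T))"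
    unfolding fourier_coeff_def expect_p_def by (rule sum.cong[OF refl]) (simp add: sum_distrib_left mult_ac)
  also have "\<dots> = (\<Sum>T'\<in>Pow {1..n}. mu_p p n T' * f T' * (\<Sum>S\<in>Pow {1..n}. walsh_u p S T' * walsh_u p S T))"
    by (subst sum.swap) (simp add: sum_distrib_left)
  also have "\<dots> = (\<Sum>T'\<in>Pow {1..n}. (if T' = T then mu_p p n T' * f T' * (1 / mu_p p n T') else 0))"
  proof (rule sum.cong[OF refl])
    fix T' assume T': "T' \<in> Pow {1..n}"
    show "mu_p p n T' * f T' * (\<Sum>S\<in>Pow {1..n}. walsh_u p S T' * walsh_u p S T) =
      (if T' = T then mu_p p n T' * f T' * (1 / mu_p p n T') else 0)"
      unfolding kernel[OF p T' T] by simp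
  qed
  also have "\<dots> = f T" using T mu_pos[OF p, of n T] by (simp add: sum.delta')
  finally show ?thesis .
qed

lemma parseval:
  assumes p: "0 < p" "p < 1"
  shows "(\<Sum>S\<in>Pow {1..n}. (fourier_coeff p n f S)\<^sup>2) = expect_p p n (\<lambda>T. (f T)\<^sup>2)"
proof -
  have "expect_p p n (\<lambda>T. (f T)\<^sup>2) = (\<Sum>T\<in>Pow {1..n}. mu_p p n T * f T * (\<Sum>S\<in>Pow {1..n}. fourier_coeff p n f S * walsh_u p S T))"
    unfolding expect_p_def
  proof (rule sum.cong[OF refl])
    fix T assume T: "T \<in> Pow {1..n}"
    show "mu_p p n T * (f T)\<^sup>2 = mu_p p n T * f T * (\<Sum>S\<in>Pow {1..n}. fourier_coeff p n f S * walsh_u p S T)"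
      unfolding inversion[OF p T] by (simp add: power2_eq_square)
  qed
  also have "\<dots> = (\<Sum>S\<in>Pow {1..n}. fourier_coeff p n f S * (\<Sum>T\<in>Pow {1..n}. mu_p p n T * (f T * walsh_u p S T)))"
  proof -
    have "(\<Sum>T\<in>Pow {1..n}. mu_p p n T * f T * (\<Sum>S\<in>Pow {1..n}. fourier_coeff p n f S * walsh_u p S T))
      = (\<Sum>T\<in>Pow {1..n}. \<Sum>S\<in>Pow {1..n}. fourier_coeff p n f S * (mu_p p n T * (f T * walsh_u p S T)))"
      by (simp add: sum_distrib_left mult_ac)
    also have "\<dots> = (\<Sum>S\<in>Pow {1..n}. \<Sum>T\<in>Pow {1..n}. fourier_coeff p n f S * (mu_p p n T * (f T * walsh_u p S T)))"
      by (rule sum.swap)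
    finally show ?thesis by (simp add: sum_distrib_left)
  qed
  also have "\<dots> = (\<Sum>S\<in>Pow {1..n}. (fourier_coeff p n f S)\<^sup>2)"
    unfolding fourier_coeff_def expect_p_def by (simp add: power2_eq_square)
  finally show ?thesis ..
qed



theorem proposition3p4:
  fixes p q :: real and n d :: nat and f :: "nat set \<Rightarrow> real"
  assumes "0 < p" and "p \<le> 1/2"
    and "\<forall>S. S \<subseteq> {1..n} \<and> card S > d \<longrightarrow> fourier_coeff p n f S = 0"
    and "q \<ge> 2"
  shows "qnorm_p p n q f \<le>
    ((1 - p) / (p * of_int \<lfloor>log 2 (1 / p)\<rfloor>) * (q - 1)) powr (real d / 2) * qnorm_p p n 2 f"
proof -
  note p0 = assms(1) and ph = assms(2) and deg = assms(3) and q = assms(4)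
  have p1: "p < 1" using ph by simp
  define L where "L = log 2 (1 / p)"
  have L1: "L \<ge> 1" unfolding L_def using p0 ph by (simp add: le_log_iff field_simps)
  define k where "k = nat \<lfloor>L\<rfloor>"
  have kL: "real k = of_int \<lfloor>L\<rfloor>" unfolding k_def using L1 by simp
  have k1: "k \<ge> 1" unfolding k_def using L1 by linarith
  have "2 powr real k \<le> 2 powr L" using kL by (intro powr_mono) auto
  also have "2 powr L = 1 / p" unfolding L_def using p0 by simp
  finally have "2 ^ k \<le> 1 / p" by (simp add: powr_realpow)
  then have kp: "2 ^ k * p \<le> 1" using p0 by (simp add: field_simps)
  have kp2: "real k * p \<le> 1 - p"
  proof -
    have "Suc k \<le> 2 ^ k" using less_exp[of k] by (simp only: Suc_le_eq)
    then have "real (Suc k) \<le> real (2 ^ k)" by (simp only: of_nat_le_iff)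
    then have "real (Suc k) \<le> 2 ^ k" by simp
    then have "real (Suc k) * p \<le> 2 ^ k * p" using p0 by (intro mult_right_mono) auto
    then show ?thesis using kp by (simp add: algebra_simps)
  qed
  define c where "c = sqrt (real k / (q - 1))"
  define t where "t = sqrt (p / (1 - p))"
  define \<rho> where "\<rho> = c * t"
  have c0: "c > 0" unfolding c_def using k1 q by simp
  have t0: "t > 0" unfolding t_def using p0 p1 by simp
  have rho0: "\<rho> > 0" unfolding \<rho>_def using c0 t0 by simp
  have ts: "sqrt ((1 - p) / p) * t = 1" unfolding t_def using st_one[OF p0 p1] .
  have tt: "t * t = p / (1 - p)" unfolding t_def using p0 p1 by simp
  have OB: "p * \<bar>a - \<rho> * sqrt ((1 - p) / p) * b\<bar> powr q + (1 - p) * \<bar>a + \<rho> * sqrt (p / (1 - p)) * b\<bar> powr q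
                 \<le> (a\<^sup>2 + b\<^sup>2) powr (q / 2)" for a b
  proof -
    have e1: "\<rho> * sqrt ((1 - p) / p) * b = c * b" unfolding \<rho>_def using ts by (simp add: mult_ac)
    have e2: "\<rho> * sqrt (p / (1 - p)) * b = c * (p / (1 - p)) * b" unfolding \<rho>_def t_def[symmetric] using tt
      by (simp add: mult_ac)
    show ?thesis unfolding e1 e2 c_def using biased_bit[OF p0 ph k1 kp q, of a b] by simp
  qed
  define R where "R = (1 - p) / (p * real k) * (q - 1)"
  have R1: "R \<ge> 1"
  proof -
    have "(1 - p) / (p * real k) \<ge> 1" using kp2 p0 k1 by (simp add: field_simps)
    moreover have "q - 1 \<ge> 1" using q by simp
    ultimately have "1 * 1 \<le> (1 - p) / (p * real k) * (q - 1)" by (intro mult_mono) auto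
    then show ?thesis unfolding R_def by simp
  qed
  have Rrho: "R * \<rho>\<^sup>2 = 1"
  proof -
    have "\<rho>\<^sup>2 = (real k / (q - 1)) * (p / (1 - p))" unfolding \<rho>_def power_mult_distrib c_def t_def
      using q p0 p1 by simp
    have nz: "p \<noteq> 0" "real k \<noteq> 0" "q - 1 \<noteq> 0" "1 - p \<noteq> 0" using q p0 p1 k1 by auto
    have "R * \<rho>\<^sup>2 = ((1 - p) / (1 - p)) * (p / p) * (real k / real k) * ((q - 1) / (q - 1))"
      unfolding R_def \<open>\<rho>\<^sup>2 = _\<close> by (simp add: divide_simps mult_ac)
    then show ?thesis using nz by simp
  qed
  define fh where "fh = fourier_coeff p n f"
  define cc where "cc = (\<lambda>S. fh S / \<rho> ^ card S)"
  define V where "V = expect_p p n (\<lambda>T. (f T)\<^sup>2)"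
  have V0: "V \<ge> 0" unfolding V_def by (rule expect_nonneg) (use p0 p1 in auto)
  have hyp: "expect_p p n (\<lambda>T. \<bar>\<Sum>S\<in>Pow {1..n}. \<rho> ^ card S * cc S * walsh_u p S T\<bar> powr q)
           \<le> (\<Sum>S\<in>Pow {1..n}. (cc S)\<^sup>2) powr (q / 2)"
    by (rule hyper[OF p0 p1 q OB])
  have lhs: "expect_p p n (\<lambda>T. \<bar>\<Sum>S\<in>Pow {1..n}. \<rho> ^ card S * cc S * walsh_u p S T\<bar> powr q)
      = expect_p p n (\<lambda>T. \<bar>f T\<bar> powr q)"
  proof (rule expect_cong)
    fix T assume T: "T \<in> Pow {1..n}"
    have "(\<Sum>S\<in>Pow {1..n}. \<rho> ^ card S * cc S * walsh_u p S T) = (\<Sum>S\<in>Pow {1..n}. fh S * walsh_u p S T)"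
      unfolding cc_def using rho0 by (intro sum.cong) auto
    then show "\<bar>\<Sum>S\<in>Pow {1..n}. \<rho> ^ card S * cc S * walsh_u p S T\<bar> powr q = \<bar>f T\<bar> powr q"
      unfolding fh_def inversion[OF p0 p1 T] by simp
  qed
  have sumcc: "(\<Sum>S\<in>Pow {1..n}. (cc S)\<^sup>2) \<le> R ^ d * V"
  proof -
    have "(\<Sum>S\<in>Pow {1..n}. (cc S)\<^sup>2) \<le> (\<Sum>S\<in>Pow {1..n}. R ^ d * (fh S)\<^sup>2)"
    proof (rule sum_mono)
      fix S assume S: "S \<in> Pow {1..n}"
      show "(cc S)\<^sup>2 \<le> R ^ d * (fh S)\<^sup>2"
      proof (cases "card S > d")
        case True
        then have "fh S = 0" unfolding fh_def using deg S by auto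
        then show ?thesis unfolding cc_def by simp
      next
        case False
        have "(cc S)\<^sup>2 = R ^ card S * (fh S)\<^sup>2"
        proof -
          have "R ^ card S * (\<rho>\<^sup>2) ^ card S = 1" using Rrho by (metis power_mult_distrib power_one)
          then have "R ^ card S = 1 / (\<rho>\<^sup>2) ^ card S" using rho0 by (simp add: field_simps)
          then show ?thesis unfolding cc_def by (simp add: power_divide power_mult[symmetric] power_mult_distrib mult.commute[of 2])
        qed
        also have "\<dots> \<le> R ^ d * (fh S)\<^sup>2"
          using False R1 by (intro mult_right_mono power_increasing) auto
        finally show ?thesis .
      qed
    qed
    also have "\<dots> = R ^ d * V"
      unfolding sum_distrib_left[symmetric] V_def fh_def parseval[OF p0 p1] ..
    finally show ?thesis .
  qed
  have Eq: "expect_p p n (\<lambda>T. \<bar>f T\<bar> powr q) \<le> (R ^ d * V) powr (q / 2)"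
  proof -
    have "0 \<le> (\<Sum>S\<in>Pow {1..n}. (cc S)\<^sup>2)" by (intro sum_nonneg) auto
    then have "(\<Sum>S\<in>Pow {1..n}. (cc S)\<^sup>2) powr (q / 2) \<le> (R ^ d * V) powr (q / 2)"
      using sumcc q by (intro powr_mono2) auto
    then show ?thesis using hyp lhs by simp
  qed
  have E0: "expect_p p n (\<lambda>T. \<bar>f T\<bar> powr q) \<ge> 0" by (rule expect_nonneg) (use p0 p1 in auto)
  have RdV: "R ^ d * V \<ge> 0" using R1 V0 by simp
  have "qnorm_p p n q f \<le> ((R ^ d * V) powr (q / 2)) powr (1 / q)"
    unfolding qnorm_p_def using Eq E0 q by (intro powr_mono2) auto
  also have "\<dots> = (R ^ d * V) powr (1 / 2)" using q RdV by (simp add: powr_powr)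
  also have "\<dots> = R powr (real d / 2) * V powr (1 / 2)"
    using R1 V0 by (simp add: powr_mult powr_realpow[symmetric] powr_powr)
  also have "V powr (1 / 2) = qnorm_p p n 2 f"
  proof -
    have "expect_p p n (\<lambda>T. \<bar>f T\<bar> powr 2) = V" unfolding V_def
      by (rule expect_cong) (simp add: abs_powr_sq)
    then show ?thesis unfolding qnorm_p_def by simp
  qed
  also have "R = (1 - p) / (p * of_int \<lfloor>log 2 (1 / p)\<rfloor>) * (q - 1)"
    unfolding R_def kL L_def ..
  finally show ?thesis .
qed

end
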